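(* Let $p>3$ be a prime, $e\in\{3,4,6\}$ with $e\mid p+1$, $k\ge1$, $\alpha\in\mathbb{P}^1(\mathbb{Q}_p)$ with $v(\alpha^{-1})\ge0$, and let $g_k(x)=x^{p^{2k}}+\sum_{n=1}^k(-1)^np^n(x^{p^{2k-2n}}+\alpha^{-1}\pi_e^2x^{p^{2k+1-2n}})$. Let $n\in\{0,\dots,k\}$, $a\in\mathbb{C}_p$, and let $\gamma$ be a root of $g_k$ maximising $v(a-\gamma)$ among the roots of $g_k$. If $v(g_k(a))>k-n+\frac{1}{p^2-1}$, then $v(a-\gamma)>\frac{1}{p^{2n}(p^2-1)}$. If moreover $v(g_k(a))\le k-n+1+\frac{1}{p^2-1}$, then $v(a-\gamma)=\frac{1}{p^{2n}}\big(v(g_k(a))-k+n\big)$.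
   Context: $v$ is the $p$-adic valuation on $\mathbb{C}_p$ with $v(p)=1$; $\pi_e\in\overline{\mathbb{Q}}_p$ is a fixed root of $x^e+p$; convention $\alpha^{-1}=0$ if $\alpha=\infty$. *)

theory Defs
  imports "HOL-Analysis.Analysis" "HOL-Computational_Algebra.Polynomial" "HOL-Library.Extended_Real"
begin

definition is_valuation :: "('a::field \<Rightarrow> ereal) \<Rightarrow> bool" where
  "is_valuation v \<longleftrightarrow>
     (\<forall>x. v x = \<infinity> \<longleftrightarrow> x = 0) \<and>
     (\<forall>x. v x \<noteq> -\<infinity>) \<and>
     (\<forall>x y. v (x * y) = v x + v y) \<and>
     (\<forall>x y. min (v x) (v y) \<le> v (x + y))"

definition v_cauchy :: "('a::field \<Rightarrow> ereal) \<Rightarrow> (nat \<Rightarrow> 'a) \<Rightarrow> bool" where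
  "v_cauchy v X \<longleftrightarrow> (\<forall>M::real. \<exists>N. \<forall>m\<ge>N. \<forall>n\<ge>N. ereal M \<le> v (X m - X n))"

definition v_converges_to :: "('a::field \<Rightarrow> ereal) \<Rightarrow> (nat \<Rightarrow> 'a) \<Rightarrow> 'a \<Rightarrow> bool" where
  "v_converges_to v X L \<longleftrightarrow> (\<forall>M::real. \<exists>N. \<forall>n\<ge>N. ereal M \<le> v (X n - L))"

definition Qp_set :: "('a::field_char_0 \<Rightarrow> ereal) \<Rightarrow> 'a set" where
  "Qp_set v = {x. \<forall>M::real. \<exists>q::rat. ereal M \<le> v (x - of_rat q)}"

text \<open>Such a field is isometrically isomorphic to C_p.\<close>
definition is_Cp_model :: "nat \<Rightarrow> ('a::field_char_0 \<Rightarrow> ereal) \<Rightarrow> bool" where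
  "is_Cp_model p v \<longleftrightarrow>
     is_valuation v \<and>
     v (of_nat p) = 1 \<and>
     (\<forall>X. v_cauchy v X \<longrightarrow> (\<exists>L. v_converges_to v X L)) \<and>
     (\<forall>q::'a poly. 0 < degree q \<longrightarrow> (\<exists>x. poly q x = 0)) \<and>
     (\<forall>x. \<forall>M::real. \<exists>y. ereal M \<le> v (x - y) \<and>
          (\<exists>q::'a poly. q \<noteq> 0 \<and> (\<forall>i. coeff q i \<in> Qp_set v) \<and> poly q y = 0))"

text \<open>g_k(x) = x^(p^(2k)) + sum_{n=1}^k (-1)^n p^n (x^(p^(2k-2n)) + beta pi^2 x^(p^(2k+1-2n))),
  where beta = alpha^(-1).\<close>
definition g_poly_fun :: "nat \<Rightarrow> nat \<Rightarrow> 'a::field \<Rightarrow> 'a \<Rightarrow> 'a \<Rightarrow> 'a" where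
  "g_poly_fun p k \<beta> \<pi> x =
     x ^ (p ^ (2*k)) +
     (\<Sum>n=1..k. (-1) ^ n * of_nat p ^ n *
        (x ^ (p ^ (2*k - 2*n)) + \<beta> * \<pi>^2 * x ^ (p ^ (2*k + 1 - 2*n))))"

end

theory Submission
  imports Defs
begin

locale valn = fixes v :: "'a::field_char_0 \<Rightarrow> ereal" assumes isv: "is_valuation v"
begin

lemma v_inf_iff: "v x = \<infinity> \<longleftrightarrow> x = 0" using isv unfolding is_valuation_def by blast
lemma v_ninf: "v x \<noteq> -\<infinity>" using isv unfolding is_valuation_def by blast
lemma v_mult: "v (x*y) = v x + v y" using isv unfolding is_valuation_def by blast
lemma v_add: "min (v x) (v y) \<le> v (x+y)" using isv unfolding is_valuation_def by blast
lemma v_zero[simp]: "v 0 = \<infinity>" using v_inf_iff by blast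

lemma v_one[simp]: "v 1 = 0"
proof -
  have "v 1 = v 1 + v 1" using v_mult[of 1 1] by simp
  moreover have "v 1 \<noteq> \<infinity>" using v_inf_iff by simp
  ultimately show ?thesis using v_ninf[of 1] by (cases "v 1") auto
qed

lemma v_neg_one[simp]: "v (-1) = 0"
proof -
  have "v (-1) + v (-1) = 0" using v_mult[of "-1" "-1"] by simp
  moreover have "v (-1) \<noteq> \<infinity>" using v_inf_iff by simp
  ultimately show ?thesis using v_ninf[of "-1"] by (cases "v (-1)") auto
qed

lemma v_neg[simp]: "v (- x) = v x"
  using v_mult[of "-1" x] by simp

lemma v_pow: "v (x ^ n) = ereal (real n) * v x"
proof (induction n)
  case 0 then show ?case by simp
next
  case (Suc n)
  have "v (x ^ Suc n) = v x + v (x^n)" by (simp add: v_mult)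
  also have "\<dots> = v x + ereal (real n) * v x" using Suc by simp
  also have "\<dots> = ereal (real (Suc n)) * v x"
    using v_ninf[of x] by (cases "v x") (auto simp: algebra_simps)
  finally show ?case .
qed

lemma v_add_ge: "B \<le> v x \<Longrightarrow> B \<le> v y \<Longrightarrow> B \<le> v (x + y)"
  using v_add[of x y] by (meson min_le_iff_disj order_trans min.boundedI)

lemma v_diff_ge: "B \<le> v x \<Longrightarrow> B \<le> v y \<Longrightarrow> B \<le> v (x - y)"
  using v_add_ge[of B x "-y"] by simp

lemma v_sum_ge: "(\<And>i. i \<in> A \<Longrightarrow> B \<le> v (f i)) \<Longrightarrow> B \<le> v (sum f A)"
proof (induction A rule: infinite_finite_induct)
  case (insert x F) then show ?case by (simp add: v_add_ge)
qed auto

lemma v_add_strict: assumes "v x < v y" shows "v (x + y) = v x"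
proof -
  have a: "v x \<le> v (x + y)" using v_add[of x y] assms by simp
  have "min (v (x+y)) (v (-y)) \<le> v x" using v_add[of "x+y" "-y"] by simp
  then have "v x \<ge> v (x+y)" using assms by (auto simp: min_def split: if_splits)
  with a show ?thesis by simp
qed

lemma v_of_nat_ge: "0 \<le> v (of_nat n)"
proof (induction n)
  case (Suc n) then show ?case using v_add_ge[of 0 1 "of_nat n"] by (simp add: add.commute)
qed simp

lemma v_of_nat_pow_mult: assumes "v (of_nat p) = 1" shows "ereal (real f) \<le> v (of_nat (p^f * r))"
proof -
  have "v (of_nat (p^f * r)) = ereal (real f) * 1 + v (of_nat r)"
    by (simp add: v_mult v_pow assms)
  then show ?thesis using v_of_nat_ge[of r] by (simp add: add_increasing2)
qed

end

lemma p_decomp: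
  fixes p j :: nat assumes "p > 1" "j > 0"
  shows "\<exists>e u. j = p^e * u \<and> \<not> p dvd u"
  using assms(2)
proof (induction j rule: less_induct)
  case (less j)
  show ?case
  proof (cases "p dvd j")
    case True
    then obtain j' where j': "j = p * j'" by blast
    with less.prems assms have "j' < j" "j' > 0" by auto
    from less.IH[OF this] obtain e u where "j' = p^e*u" "\<not> p dvd u" by blast
    then show ?thesis using j' by (intro exI[of _ "Suc e"] exI[of _ u]) auto
  next
    case False then show ?thesis by (intro exI[of _ 0] exI[of _ j]) auto
  qed
qed

lemma binom_pdvd:
  fixes p j t e u :: nat
  assumes "prime p" "1 \<le> j" "j = p^e * u" "\<not> p dvd u"
  shows "p^(t-e) dvd (p^t choose j)"
proof (cases "e \<le> t")
  case True
  obtain j' where jj: "j = Suc j'" using assms(2) by (cases j) auto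
  have "j * (p^t choose j) = p^t * ((p^t - 1) choose j')"
    using binomial_absorption[of j' "p^t"] jj by simp
  then have "p^e * (u * (p^t choose j)) = p^e * (p^(t-e) * ((p^t - 1) choose j'))"
    using assms(3) True by (simp add: power_add[symmetric] mult.assoc)
  then have "u * (p^t choose j) = p^(t-e) * ((p^t - 1) choose j')"
    using assms(1) by (simp add: prime_gt_0_nat)
  then have "p^(t-e) dvd u * (p^t choose j)" by simp
  moreover have "coprime (p^(t-e)) u"
    using assms(1,4) by (simp add: prime_imp_coprime)
  ultimately show ?thesis by (metis coprime_dvd_mult_right_iff mult.commute)
next
  case False then show ?thesis by simp
qed

lemma poly_factor_alg:
  fixes f :: "'a::field poly"
  assumes alg: "\<forall>q::'a poly. 0 < degree q \<longrightarrow> (\<exists>x. poly q x = 0)" and "f \<noteq> 0"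
  shows "\<exists>c ws. c \<noteq> 0 \<and> f = smult c (\<Prod>w\<leftarrow>ws. [:-w,1:])"
  using assms(2)
proof (induction "degree f" arbitrary: f rule: less_induct)
  case less
  show ?case
  proof (cases "degree f = 0")
    case True
    then obtain c where "f = [:c:]" using degree_eq_zeroE by blast
    with less.prems show ?thesis by (intro exI[of _ c] exI[of _ "[]"]) auto
  next
    case False
    then obtain x where "poly f x = 0" using alg by auto
    then obtain q where q: "f = [:-x,1:] * q" using poly_eq_0_iff_dvd by (metis dvdE)
    with less.prems have qn: "q \<noteq> 0" by auto
    have "degree f = degree [:-x,1:] + degree q" unfolding q by (rule degree_mult_eq) (use qn in auto)
    then have "degree f = Suc (degree q)" by simp
    then have "degree q < degree f" by simp
    from less.hyps[OF this qn] obtain c ws where "c \<noteq> 0" "q = smult c (\<Prod>w\<leftarrow>ws. [:-w,1:])" by blast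
    then show ?thesis using q by (intro exI[of _ c] exI[of _ "x#ws"]) (simp add: mult_smult_right)
  qed
qed

context valn begin

definition gb :: "real \<Rightarrow> 'a poly \<Rightarrow> real \<Rightarrow> bool" where
  "gb d f c \<longleftrightarrow> (\<forall>j. ereal c \<le> v (coeff f j) + ereal (real j * d))"

lemma ereal_shift: "x \<noteq> -\<infinity> \<Longrightarrow> (ereal a \<le> x + ereal b) = (ereal (a - b) \<le> x)"
  by (cases x) auto

lemma gb_mult: assumes "gb d f c1" "gb d g c2" shows "gb d (f*g) (c1+c2)"
  unfolding gb_def
proof
  fix n
  have "ereal (c1 + c2 - real n * d) \<le> v (\<Sum>i\<le>n. coeff f i * coeff g (n-i))"
  proof (rule v_sum_ge)
    fix i assume "i \<in> {..n}"
    then have i: "i \<le> n" by simp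
    have a: "ereal (c1 - real i * d) \<le> v (coeff f i)"
      using assms(1) ereal_shift[OF v_ninf] unfolding gb_def by blast
    have b: "ereal (c2 - real (n-i) * d) \<le> v (coeff g (n-i))"
      using assms(2) ereal_shift[OF v_ninf] unfolding gb_def by blast
    have "ereal (c1 + c2 - real n * d) = ereal (c1 - real i * d) + ereal (c2 - real (n-i) * d)"
      using i by (simp add: of_nat_diff algebra_simps)
    also have "\<dots> \<le> v (coeff f i) + v (coeff g (n-i))" using a b by (rule add_mono)
    finally show "ereal (c1 + c2 - real n * d) \<le> v (coeff f i * coeff g (n - i))" by (simp add: v_mult)
  qed
  then show "ereal (c1 + c2) \<le> v (coeff (f * g) n) + ereal (real n * d)"
    by (simp add: coeff_mult ereal_shift[OF v_ninf])
qed

lemma gb_lin: assumes "c \<le> d" "ereal c \<le> v w" shows "gb d [:-w,1:] c"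
  unfolding gb_def
proof
  fix j show "ereal c \<le> v (coeff [:- w, 1:] j) + ereal (real j * d)"
  proof (cases j)
    case 0 then show ?thesis using assms by simp
  next
    case (Suc j') then show ?thesis using assms by (cases j') auto
  qed
qed

lemma gb_one: "gb d 1 0"
  unfolding gb_def by (auto simp: coeff_1)

lemma gb_smult: assumes "gb d f c" "a \<noteq> 0" shows "gb d (smult a f) (real_of_ereal (v a) + c)"
proof -
  have "gb d [:a:] (real_of_ereal (v a))"
    unfolding gb_def using assms(2) v_inf_iff[of a] v_ninf[of a]
    by (auto simp: coeff_pCons split: nat.splits) (cases "v a"; simp)+
  from gb_mult[OF this assms(1)] show ?thesis by simp
qed

definition cw :: "real \<Rightarrow> 'a \<Rightarrow> real" where "cw d w = real_of_ereal (min (ereal d) (v w))"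

lemma cw_eq: "ereal (cw d w) = min (ereal d) (v w)"
  unfolding cw_def using v_ninf[of w] by (cases "v w") (auto simp: min_def)

lemma gb_prod: "gb d (\<Prod>w\<leftarrow>ws. [:-w,1:]) (\<Sum>w\<leftarrow>ws. cw d w)"
proof (induction ws)
  case Nil then show ?case using gb_one by simp
next
  case (Cons w ws)
  have "gb d [:-w,1:] (cw d w)"
  proof (rule gb_lin)
    have "ereal (cw d w) \<le> ereal d" unfolding cw_eq by simp
    then show "cw d w \<le> d" by simp
    show "ereal (cw d w) \<le> v w" unfolding cw_eq by simp
  qed
  from gb_mult[OF this Cons.IH] show ?case by simp
qed

lemma v_prod_list: "v (\<Prod>w\<leftarrow>ws. f w) = (\<Sum>w\<leftarrow>ws. v (f w))"
  by (induction ws) (auto simp: v_mult)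

lemma poly_lin_prod: "poly (\<Prod>w\<leftarrow>ws. [:-w,1:]) (z::'a) = (\<Prod>w\<leftarrow>ws. z - w)"
proof (induction ws)
  case (Cons a ws)
  have "poly [:-a,1:] z = z - a" by (simp add: algebra_simps)
  then show ?case using Cons by (simp add: left_diff_distrib)
qed simp

lemma key_upper:
  assumes "f = smult c (\<Prod>w\<leftarrow>ws. [:-w,1:])" "c \<noteq> 0"
    and "\<forall>w\<in>set ws. v (z - w) \<le> ereal d \<and> v (z - w) \<le> v w"
  shows "v (poly f z) \<le> v (coeff f J) + ereal (real J * d)"
proof -
  have g: "gb d f (real_of_ereal (v c) + (\<Sum>w\<leftarrow>ws. cw d w))"
    using gb_smult[OF gb_prod assms(2)] assms(1) by simp
  have "v (poly f z) = v c + (\<Sum>w\<leftarrow>ws. v (z - w))"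
    using assms(1) by (simp add: poly_lin_prod v_mult v_prod_list)
  also have "(\<Sum>w\<leftarrow>ws. v (z - w)) \<le> (\<Sum>w\<leftarrow>ws. ereal (cw d w))"
    using assms(3) by (intro sum_list_mono) (simp add: cw_eq)
  also have "(\<Sum>w\<leftarrow>ws. ereal (cw d w)) = ereal (\<Sum>w\<leftarrow>ws. cw d w)"
    by (induction ws) auto
  also have "v c + ereal (\<Sum>w\<leftarrow>ws. cw d w) = ereal (real_of_ereal (v c) + (\<Sum>w\<leftarrow>ws. cw d w))"
    using v_ninf[of c] v_inf_iff[of c] assms(2) by (cases "v c") auto
  also have "\<dots> \<le> v (coeff f J) + ereal (real J * d)" using g unfolding gb_def by blast
  finally show ?thesis by (simp add: add_left_mono)
qed

end

definition alpha :: "nat \<Rightarrow> nat \<Rightarrow> nat \<Rightarrow> 'a::comm_ring_1" where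
  "alpha p k s = (-1)^(k-s) * of_nat p^(k-s)"

definition Hs :: "nat \<Rightarrow> nat \<Rightarrow> 'a::comm_ring_1 \<Rightarrow> 'a \<Rightarrow> 'a poly" where
  "Hs p k \<gamma> b = (\<Sum>s\<in>{0..k}. smult (alpha p k s) ([:\<gamma>,1:] ^ (p^(2 * s)))) +
                 (\<Sum>s\<in>{..<k}. smult (alpha p k s * b) ([:\<gamma>,1:] ^ (p^(2 * s+1))))"

lemma reidx: "(\<Sum>n\<in>{1..k}. f n) = (\<Sum>s\<in>{..<k}. f (k - s))" for f :: "nat \<Rightarrow> 'b::comm_monoid_add"
  by (rule sum.reindex_bij_witness[where i="\<lambda>s. k - s" and j="\<lambda>n. k - n"]) auto

lemma poly_Hs:
  fixes \<gamma> z \<beta> \<pi> :: "'a::field"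
  shows "poly (Hs p k \<gamma> (\<beta>*\<pi>^2)) z = g_poly_fun p k \<beta> \<pi> (\<gamma> + z)"
proof -
  have "poly (Hs p k \<gamma> (\<beta>*\<pi>^2)) z = (\<Sum>s\<in>{0..k}. alpha p k s * (\<gamma>+z)^(p^(2 * s))) +
                 (\<Sum>s\<in>{..<k}. alpha p k s * (\<beta>*\<pi>^2) * (\<gamma>+z)^(p^(2 * s+1)))"
    unfolding Hs_def by (simp add: poly_sum)
  also have "(\<Sum>s\<in>{0..k}. alpha p k s * (\<gamma>+z)^(p^(2 * s))) =
     (\<gamma>+z)^(p^(2*k)) + (\<Sum>s\<in>{..<k}. alpha p k s * (\<gamma>+z)^(p^(2 * s)))"
    by (simp add: atLeast0AtMost lessThan_Suc_atMost[symmetric] alpha_def)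
  finally have 1: "poly (Hs p k \<gamma> (\<beta>*\<pi>^2)) z = (\<gamma>+z)^(p^(2*k)) + ((\<Sum>s\<in>{..<k}. alpha p k s * (\<gamma>+z)^(p^(2 * s))) +
                 (\<Sum>s\<in>{..<k}. alpha p k s * (\<beta>*\<pi>^2) * (\<gamma>+z)^(p^(2 * s+1))))" by (simp add: add.assoc)
  have 2: "g_poly_fun p k \<beta> \<pi> (\<gamma> + z) = (\<gamma>+z)^(p^(2*k)) + (\<Sum>s\<in>{..<k}. (-1) ^ (k-s) * of_nat p ^ (k-s) *
        ((\<gamma>+z) ^ (p ^ (2*k - 2*(k-s))) + \<beta> * \<pi>^2 * (\<gamma>+z) ^ (p ^ (2*k + 1 - 2*(k-s)))))"
    unfolding g_poly_fun_def by (subst reidx) simp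
  have 3: "(\<Sum>s\<in>{..<k}. (-1) ^ (k-s) * of_nat p ^ (k-s) *
        ((\<gamma>+z) ^ (p ^ (2*k - 2*(k-s))) + \<beta> * \<pi>^2 * (\<gamma>+z) ^ (p ^ (2*k + 1 - 2*(k-s))))) =
        (\<Sum>s\<in>{..<k}. alpha p k s * (\<gamma>+z)^(p^(2 * s)) + alpha p k s * (\<beta>*\<pi>^2) * (\<gamma>+z)^(p^(2 * s+1)))"
  proof (rule sum.cong)
    fix s assume "s \<in> {..<k}"
    then have "2*k - 2*(k-s) = 2 * s" "2*k + 1 - 2*(k-s) = 2 * s+1" by auto
    then show "(-1) ^ (k-s) * of_nat p ^ (k-s) *
        ((\<gamma>+z) ^ (p ^ (2*k - 2*(k-s))) + \<beta> * \<pi>^2 * (\<gamma>+z) ^ (p ^ (2*k + 1 - 2*(k-s)))) =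
        alpha p k s * (\<gamma>+z)^(p^(2 * s)) + alpha p k s * (\<beta>*\<pi>^2) * (\<gamma>+z)^(p^(2 * s+1))"
      by (simp add: alpha_def algebra_simps)
  qed simp
  show ?thesis using 1 2 3 by (simp add: sum.distrib)
qed

lemma coeff_Hs: "coeff (Hs p k \<gamma> b) j =
   (\<Sum>s\<in>{0..k}. alpha p k s * coeff ([:\<gamma>,1:] ^ (p^(2 * s))) j) +
   (\<Sum>s\<in>{..<k}. alpha p k s * b * coeff ([:\<gamma>,1:] ^ (p^(2 * s+1))) j)"
  unfolding Hs_def by (simp add: coeff_sum)

lemma coeff_T: "coeff ([:\<gamma>,1:] ^ M) j = (if j \<le> M then of_nat (M choose j) * \<gamma>^(M-j) else 0)"
  for \<gamma> :: "'a::comm_ring_1"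
proof (cases "j \<le> M")
  case True then show ?thesis using coeff_linear_poly_power[OF True, of \<gamma> 1] by simp
next
  case False
  have "degree ([:\<gamma>,1:] ^ M) \<le> M" using degree_power_le[of "[:\<gamma>,1:]" M] by simp
  then show ?thesis using False by (simp add: coeff_eq_0)
qed

context valn begin

lemma v_alpha: assumes "v (of_nat p) = 1" shows "v (alpha p k s :: 'a) = ereal (real (k - s))"
  unfolding alpha_def by (simp add: v_mult v_pow assms)

lemma v_pow_ge0: "0 \<le> v x \<Longrightarrow> 0 \<le> v (x ^ n)"
  by (simp add: v_pow)

lemma T_ge:
  assumes "prime p" "v (of_nat p) = 1" "0 \<le> v \<gamma>" "1 \<le> j" "j = p^e*u" "\<not> p dvd u" "j \<le> p^t"
  shows "ereal (real t - real e) \<le> v (coeff ([:\<gamma>,1:] ^ (p^t)) j)"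
proof -
  obtain r where r: "(p^t choose j) = p^(t-e) * r" using binom_pdvd[OF assms(1,4,5,6), of t] by blast
  have "coeff ([:\<gamma>,1:] ^ (p^t)) j = of_nat (p^(t-e) * r) * \<gamma>^(p^t - j)"
    using assms(7) by (simp add: coeff_T r)
  then have "v (coeff ([:\<gamma>,1:] ^ (p^t)) j) = v (of_nat (p^(t-e) * r)) + v (\<gamma>^(p^t - j))"
    by (simp add: v_mult)
  moreover have "ereal (real (t-e)) \<le> v (of_nat (p^(t-e) * r))" by (rule v_of_nat_pow_mult[OF assms(2)])
  moreover have "0 \<le> v (\<gamma>^(p^t - j))" using assms(3) by (rule v_pow_ge0)
  ultimately have A: "ereal (real (t-e)) + 0 \<le> v (coeff ([:\<gamma>,1:] ^ (p^t)) j)"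
    by (metis add_mono)
  have B: "ereal (real t - real e) \<le> ereal (real (t-e))" by simp
  show ?thesis using order_trans[OF B] A by simp
qed

lemma T_zero: "p^t < j \<Longrightarrow> coeff ([:\<gamma>::'a,1:] ^ (p^t)) j = 0"
  by (auto simp: coeff_T)

lemma ereal_add_le: "ereal a \<le> x \<Longrightarrow> ereal (c - a) \<le> ereal (real n) \<Longrightarrow> ereal c \<le> ereal (real n) + x"
  by (cases x) auto

lemma coeff_lower:
  assumes p: "prime p" "v (of_nat p) = 1" and g: "0 \<le> v \<gamma>" and bb: "0 \<le> v b"
    and j: "1 \<le> j" "p^(2*m) \<le> j" "m \<le> k" "m < k \<longrightarrow> j < p^(2*m+2)"
  shows "ereal (real k - real m) \<le> v (coeff (Hs p k \<gamma> b) j)"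
proof -
  have p1: "1 < p" using p(1) prime_gt_1_nat by blast
  obtain e u where eu: "j = p^e*u" "\<not> p dvd u" using p_decomp[OF p1, of j] j(1) by auto
  then have "u \<ge> 1" using j(1) by (cases u) auto
  then have pe: "p^e \<le> j" using eu(1) by simp
  have eb: "e \<le> 2*m+1" if "m < k"
  proof -
    have "p^e < p^(2*m+2)" using pe j(4) that by linarith
    then have "e < 2*m+2" using power_less_imp_less_exp[OF p1] by blast
    then show ?thesis by simp
  qed
  show ?thesis unfolding coeff_Hs
  proof (intro v_add_ge v_sum_ge)
    fix s assume s: "s \<in> {0..k}"
    show "ereal (real k - real m) \<le> v (alpha p k s * coeff ([:\<gamma>, 1:] ^ p ^ (2 * s)) j)"
    proof (cases "j \<le> p^(2* s)")
      case False then show ?thesis by (simp add: T_zero)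
    next
      case True
      have T: "ereal (real (2* s) - real e) \<le> v (coeff ([:\<gamma>, 1:] ^ p ^ (2 * s)) j)"
        using T_ge[OF p g j(1) eu True] .
      have "p^e \<le> p^(2* s)" using pe True by linarith
      then have "e \<le> 2* s" using power_le_imp_le_exp[OF p1] by blast
      moreover have "m \<le> s" using j(2) True power_le_imp_le_exp[OF p1, of "2*m" "2* s"] by simp
      ultimately have "e \<le> s + m" using eb s by (cases "s = m") auto
      then have "ereal (real k - real m - (real (2* s) - real e)) \<le> ereal (real (k - s))"
        using s by auto
      then show ?thesis by (simp add: v_mult v_alpha[OF p(2)] ereal_add_le[OF T])
    qed
  next
    fix s assume s: "s \<in> {..<k}"
    show "ereal (real k - real m) \<le> v (alpha p k s * b * coeff ([:\<gamma>, 1:] ^ p ^ (2 * s + 1)) j)"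
    proof (cases "j \<le> p^(2* s+1)")
      case False
      have "coeff ([:\<gamma>, 1:] ^ p ^ (2 * s + 1)) j = 0" using False by (intro T_zero) simp
      then show ?thesis by simp
    next
      case True
      have T: "ereal (real (2* s+1) - real e) \<le> v (coeff ([:\<gamma>, 1:] ^ p ^ (2 * s + 1)) j)"
        using T_ge[OF p g j(1) eu True] .
      have "2*m \<le> 2* s+1" using j(2) True power_le_imp_le_exp[OF p1, of "2*m" "2* s+1"] by simp
      then have "m \<le> s" by simp
      then have "e \<le> s + m + 1" using eb s by auto
      then have "ereal (real k - real m - (real (2* s+1) - real e)) \<le> ereal (real (k - s))"
        using s by auto
      then have "ereal (real k - real m) \<le> ereal (real (k - s)) + v (coeff ([:\<gamma>, 1:] ^ p ^ (2 * s + 1)) j)"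
        by (rule ereal_add_le[OF T])
      also have "\<dots> \<le> ereal (real (k - s)) + v b + v (coeff ([:\<gamma>, 1:] ^ p ^ (2 * s + 1)) j)"
        using bb by (simp add: add_increasing2 add_right_mono)
      finally show ?thesis by (simp add: v_mult v_alpha[OF p(2)])
    qed
  qed
qed

end

context valn begin

lemma coeff_exact:
  assumes p: "prime p" "v (of_nat p) = 1" and g: "0 \<le> v \<gamma>" and bb: "0 \<le> v b"
    and m: "m \<le> k"
  shows "v (coeff (Hs p k \<gamma> b) (p^(2*m))) = ereal (real k - real m)"
proof -
  have p1: "1 < p" using p(1) prime_gt_1_nat by blast
  define j where "j = p^(2*m)"
  have j1: "1 \<le> j" unfolding j_def using p1 by simp
  have eu: "j = p^(2*m) * 1" "\<not> p dvd 1" using p1 by (auto simp: j_def)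
  define f where "f s = alpha p k s * coeff ([:\<gamma>, 1:] ^ p ^ (2 * s)) j" for s
  define R where "R = (\<Sum>s\<in>{0..k}-{m}. f s) +
     (\<Sum>s\<in>{..<k}. alpha p k s * b * coeff ([:\<gamma>, 1:] ^ p ^ (2 * s + 1)) j)"
  have split: "coeff (Hs p k \<gamma> b) j = f m + R"
    unfolding coeff_Hs R_def f_def using m by (simp add: sum.remove add.assoc)
  have fm: "f m = alpha p k m" unfolding f_def j_def by (simp add: coeff_T)
  have vfm: "v (f m) = ereal (real k - real m)" using fm v_alpha[OF p(2)] m by simp
  have vR: "ereal (real k - real m + 1) \<le> v R"
    unfolding R_def
  proof (intro v_add_ge v_sum_ge)
    fix s assume s: "s \<in> {0..k}-{m}"
    show "ereal (real k - real m + 1) \<le> v (f s)"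
    proof (cases "s < m")
      case True
      then have "p^(2* s) < j" unfolding j_def using p1 by (intro power_strict_increasing) auto
      then show ?thesis unfolding f_def by (simp add: T_zero)
    next
      case False
      then have sm: "m < s" using s by auto
      then have "j \<le> p^(2* s)" unfolding j_def using p1 by (intro power_increasing) auto
      from T_ge[OF p g j1 eu this]
      have T: "ereal (real (2 * s) - real (2*m)) \<le> v (coeff ([:\<gamma>, 1:] ^ p ^ (2 * s)) j)" .
      have "ereal (real k - real m + 1 - (real (2 * s) - real (2*m))) \<le> ereal (real (k - s))"
        using s sm by auto
      then show ?thesis unfolding f_def by (simp add: v_mult v_alpha[OF p(2)] ereal_add_le[OF T])
    qed
  next
    fix s assume s: "s \<in> {..<k}"
    show "ereal (real k - real m + 1) \<le> v (alpha p k s * b * coeff ([:\<gamma>, 1:] ^ p ^ (2 * s + 1)) j)"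
    proof (cases "s < m")
      case True
      then have "p^(2* s+1) < j" unfolding j_def using p1 by (intro power_strict_increasing) auto
      then have "coeff ([:\<gamma>, 1:] ^ p ^ (2 * s + 1)) j = 0" by (rule T_zero)
      then show ?thesis by simp
    next
      case False
      then have "j \<le> p^(2* s+1)" unfolding j_def using p1 by (intro power_increasing) auto
      from T_ge[OF p g j1 eu this]
      have T: "ereal (real (2 * s + 1) - real (2*m)) \<le> v (coeff ([:\<gamma>, 1:] ^ p ^ (2 * s + 1)) j)" .
      have "ereal (real k - real m + 1 - (real (2 * s + 1) - real (2*m))) \<le> ereal (real (k - s))"
        using s False by auto
      then have "ereal (real k - real m + 1) \<le> ereal (real (k - s)) + v (coeff ([:\<gamma>, 1:] ^ p ^ (2 * s + 1)) j)"
        by (rule ereal_add_le[OF T])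
      also have "\<dots> \<le> ereal (real (k - s)) + v b + v (coeff ([:\<gamma>, 1:] ^ p ^ (2 * s + 1)) j)"
        using bb by (simp add: add_increasing2 add_right_mono)
      finally show ?thesis by (simp add: v_mult v_alpha[OF p(2)])
    qed
  qed
  have "v (f m) < v R" using vfm vR by (metis ereal_less_eq(3) less_add_one order_less_le_trans less_ereal.simps(1))
  then have "v (f m + R) = v (f m)" by (rule v_add_strict)
  then show ?thesis using split vfm j_def by simp
qed

end

lemma level: "1 < (p::nat) \<Longrightarrow> 1 \<le> j \<Longrightarrow> \<exists>m\<le>k. p^(2*m) \<le> j \<and> (m < k \<longrightarrow> j < p^(2*m+2))"
proof (induction k)
  case 0 then show ?case by auto
next
  case (Suc k)
  then obtain m where m: "m \<le> k" "p^(2*m) \<le> j" "m < k \<longrightarrow> j < p^(2*m+2)" by blast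
  show ?case
  proof (cases "m < k \<or> j < p^(2*m+2)")
    case True then show ?thesis using m by (intro exI[of _ m]) auto
  next
    case False
    then have "m = k" "p^(2*(Suc k)) \<le> j" using m by auto
    then show ?thesis by (intro exI[of _ "Suc k"]) auto
  qed
qed

lemma bern: "(q::real) \<ge> 1 \<Longrightarrow> real t * (q - 1) \<le> q^t - 1"
  using Bernoulli_inequality[of "q - 1" t] by simp

lemma final_arith1:
  fixes p k n :: nat and d x :: real
  assumes p: "p \<ge> 2" and up: "x \<le> real k - real n + real p^(2*n) * d"
    and hx: "x > real k - real n + 1 / (real p^2 - 1)"
  shows "d > 1 / (real p^(2*n) * (real p^2 - 1))"
proof -
  have "real p ^ 2 \<ge> 2^2" using p by (intro power_mono) auto
  then have q: "real p^2 - 1 > 0" by simp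
  have P: "real p^(2*n) > 0" using p by simp
  have "real p^(2*n) * d > 1 / (real p^2 - 1)" using up hx by linarith
  then show ?thesis using q P by (simp add: field_simps)
qed

lemma final_arith2:
  fixes p k n m :: nat and d x :: real
  assumes p: "p \<ge> 2" and upn: "x \<le> real k - real n + real p^(2*n) * d"
    and lo: "real k - real m + real p^(2*m) * d \<le> x"
    and dpos: "d > 1 / (real p^(2*n) * (real p^2 - 1))"
    and hx2: "x \<le> real k - real n + 1 + 1 / (real p^2 - 1)"
  shows "x = real k - real n + real p^(2*n) * d"
proof -
  have "real p ^ 2 \<ge> 2^2" using p by (intro power_mono) auto
  then have q1: "real p^2 - 1 \<ge> 3" by simp
  have P: "real p^(2*n) > 0" using p by simp
  have "1 / (real p^(2*n) * (real p^2 - 1)) > 0" using P q1 by simp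
  then have d0: "d > 0" using dpos by linarith
  have "real k - real n + real p^(2*n) * d \<le> real k - real m + real p^(2*m) * d"
  proof (cases "n \<le> m")
    case True
    define t where "t = m - n"
    have mt: "m = n + t" using True t_def by simp
    have pm: "real p^(2*m) = real p^(2*n) * (real p^2)^t" unfolding mt by (simp add: power_add power_mult)
    have b: "real t * (real p^2 - 1) \<le> (real p^2)^t - 1" by (rule bern) (use q1 in simp)
    have "real p^(2*n) * d * (real p^2 - 1) > 1" using dpos P q1 by (simp add: field_simps)
    then have "real t \<le> real t * (real p^(2*n) * d * (real p^2 - 1))"
      by (simp add: mult_le_cancel_left1)
    also have "\<dots> = real p^(2*n) * d * (real t * (real p^2 - 1))" by simp
    also have "\<dots> \<le> real p^(2*n) * d * ((real p^2)^t - 1)"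
      using b P d0 by (intro mult_left_mono) auto
    finally have "real t \<le> real p^(2*n) * d * ((real p^2)^t - 1)" .
    then show ?thesis unfolding pm using mt by (simp add: algebra_simps)
  next
    case False
    have Pm: "real p^(2*m) > 0" using p by simp
    have "real n - real m - 1 + real p^(2*m) * d \<le> 1 / (real p^2 - 1)" using lo hx2 by linarith
    moreover have "1 / (real p^2 - 1) < 1" using q1 by simp
    moreover have "real p^(2*m) * d > 0" using Pm d0 by simp
    ultimately have nm: "n = Suc m" using False by linarith
    then have "real p^(2*m) * d * (real p^2 - 1) \<le> 1"
      using \<open>real n - real m - 1 + real p^(2*m) * d \<le> 1 / (real p^2 - 1)\<close> q1
      by (simp add: field_simps)
    moreover have "2*n = 2*m + 2" using nm by simp
    then have "real p^(2*n) = real p^(2*m) * real p^2" by (simp only: power_add)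
    then have "real p^(2*n) * d - real p^(2*m) * d = real p^(2*m) * d * (real p^2 - 1)"
      by (simp add: algebra_simps)
    ultimately show ?thesis using nm by simp
  qed
  then show ?thesis using upn lo by linarith
qed

context valn begin

lemma v_mult_ge: "0 \<le> v x \<Longrightarrow> B \<le> v y \<Longrightarrow> B \<le> v (x * y)"
  by (simp add: v_mult) (metis add_mono add_0 order_trans)

lemma root_nonneg:
  fixes \<beta> \<pi> \<gamma> :: 'a
  assumes p1: "1 < p" and vp: "v (of_nat p) = 1" and k: "1 \<le> k" and vb: "0 \<le> v (\<beta>*\<pi>^2)"
    and root: "g_poly_fun p k \<beta> \<pi> \<gamma> = 0"
  shows "0 \<le> v \<gamma>"
proof (rule ccontr)
  assume "\<not> 0 \<le> v \<gamma>"
  then have neg: "v \<gamma> < 0" by simp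
  then obtain r where r: "v \<gamma> = ereal r" "r < 0" using v_ninf[of \<gamma>] by (cases "v \<gamma>") auto
  define N where "N = p^(2*k)"
  have N1: "1 \<le> N" unfolding N_def using p1 by simp
  have vpow: "v (\<gamma>^M) = ereal (real M * r)" for M by (simp add: v_pow r)
  have small: "ereal ((real N - 1) * r) \<le> v (\<gamma>^M)" if "M < N" for M
  proof -
    have "real M \<le> real N - 1" using that by linarith
    then have "(real N - 1) * r \<le> real M * r" using r(2) by (intro mult_right_mono_neg) auto
    then show ?thesis by (simp add: vpow)
  qed
  define R where "R = (\<Sum>n=1..k. (-1) ^ n * of_nat p ^ n *
        (\<gamma> ^ (p ^ (2*k - 2*n)) + \<beta> * \<pi>^2 * \<gamma> ^ (p ^ (2*k + 1 - 2*n))) :: 'a)"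
  have vR: "ereal ((real N - 1) * r) \<le> v R"
    unfolding R_def
  proof (intro v_sum_ge)
    fix n assume n: "n \<in> {1..k}"
    have "p ^ (2*k - 2*n) < N" unfolding N_def using n p1 by (intro power_strict_increasing) auto
    moreover have "p ^ (2*k + 1 - 2*n) < N" unfolding N_def using n p1 by (intro power_strict_increasing) auto
    ultimately have A: "ereal ((real N - 1) * r) \<le> v (\<gamma> ^ (p ^ (2*k - 2*n)) + \<beta> * \<pi>^2 * \<gamma> ^ (p ^ (2*k + 1 - 2*n)))"
      by (intro v_add_ge small v_mult_ge[OF vb])
    have "0 \<le> v ((-1) ^ n * of_nat p ^ n :: 'a)" by (simp add: v_mult v_pow vp)
    then show "ereal ((real N - 1) * r) \<le> v ((-1) ^ n * of_nat p ^ n *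
        (\<gamma> ^ (p ^ (2*k - 2*n)) + \<beta> * \<pi>^2 * \<gamma> ^ (p ^ (2*k + 1 - 2*n))))"
      using A by (rule v_mult_ge)
  qed
  have "v (\<gamma>^N) < v R"
  proof -
    have "real N * r < (real N - 1) * r" using r(2) by (simp add: algebra_simps)
    then show ?thesis using vR vpow[of N] by (metis ereal_less_eq(3) order_less_le_trans less_ereal.simps(1))
  qed
  then have "v (\<gamma>^N + R) = v (\<gamma>^N)" by (rule v_add_strict)
  moreover have "\<gamma>^N + R = 0" using root unfolding g_poly_fun_def R_def N_def by simp
  ultimately show False using vpow[of N] by simp
qed

end

theorem mainTheorem17:
  fixes p k e n :: nat and v :: "'a::field_char_0 \<Rightarrow> ereal"
    and \<beta> \<pi> a \<gamma> :: 'a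
  assumes "prime p" and "p > 3"
    and "e \<in> {3, 4, 6}" and "e dvd p + 1"
    and "k \<ge> 1"
    and "is_Cp_model p v"
    and "\<pi> ^ e = - of_nat p"
    and "\<beta> \<in> Qp_set v" and "v \<beta> \<ge> 0"
    and "n \<le> k"
    and "g_poly_fun p k \<beta> \<pi> \<gamma> = 0"
    and "\<forall>\<delta>. g_poly_fun p k \<beta> \<pi> \<delta> = 0 \<longrightarrow> v (a - \<delta>) \<le> v (a - \<gamma>)"
    and "v (g_poly_fun p k \<beta> \<pi> a) > ereal (real k - real n + 1 / (real p ^ 2 - 1))"
  shows "v (a - \<gamma>) > ereal (1 / (real p ^ (2*n) * (real p ^ 2 - 1))) \<and>
         (v (g_poly_fun p k \<beta> \<pi> a) \<le> ereal (real k - real n + 1 + 1 / (real p ^ 2 - 1)) \<longrightarrow>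
         v (a - \<gamma>) = ereal (1 / real p ^ (2*n)) * (v (g_poly_fun p k \<beta> \<pi> a) - ereal (real k - real n)))"
proof -
  have isv: "is_valuation v" and vp: "v (of_nat p) = 1"
    and alg: "\<forall>q::'a poly. 0 < degree q \<longrightarrow> (\<exists>x. poly q x = 0)"
    using assms(6) unfolding is_Cp_model_def by blast+
  interpret valn v by (rule valn.intro[OF isv])
  have p1: "1 < p" using assms(2) by simp
  have p2: "p \<ge> 2" using assms(2) by simp
  define b where "b = \<beta> * \<pi>^2"
  have e0: "e > 0" using assms(3) by auto
  have vpi: "0 \<le> v \<pi>"
  proof -
    have "\<pi> \<noteq> 0" using assms(7) e0 p1 by (auto simp: zero_power)
    then obtain r where r: "v \<pi> = ereal r" using v_ninf[of \<pi>] v_inf_iff[of \<pi>] by (cases "v \<pi>") auto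
    have "v (\<pi>^e) = 1" using assms(7) vp by simp
    then have "real e * r = 1" by (simp add: v_pow r)
    then have "r > 0" using mult_nonneg_nonpos[of "real e" r] by (cases "r > 0") auto
    then show ?thesis using r by simp
  qed
  have vb: "0 \<le> v b" unfolding b_def using assms(9) vpi
    by (simp add: v_mult v_pow)
  have vg: "0 \<le> v \<gamma>" using root_nonneg[OF p1 vp assms(5) vb[unfolded b_def] assms(11)] .
  define g where "g = g_poly_fun p k \<beta> \<pi>"
  show ?thesis
  proof (cases "a = \<gamma>")
    case True
    then show ?thesis using assms(11) by simp
  next
    case False
    then obtain d where d: "v (a - \<gamma>) = ereal d" using v_ninf[of "a-\<gamma>"] v_inf_iff[of "a-\<gamma>"]
      by (cases "v (a - \<gamma>)") auto
    define H where "H = Hs p k \<gamma> b"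
    have polyH: "poly H z = g (\<gamma> + z)" for z unfolding H_def b_def g_def by (rule poly_Hs)
    have cex: "v (coeff H (p^(2*m))) = ereal (real k - real m)" if "m \<le> k" for m
      unfolding H_def by (rule coeff_exact[OF assms(1) vp vg vb that])
    have "coeff H (p^(2*k)) \<noteq> 0" using cex[of k] by auto
    then have "H \<noteq> 0" by auto
    then obtain c ws where cws: "c \<noteq> 0" "H = smult c (\<Prod>w\<leftarrow>ws. [:-w,1:])"
      using poly_factor_alg[OF alg] by blast
    define z0 where "z0 = a - \<gamma>"
    have wsprop: "\<forall>w\<in>set ws. v (z0 - w) \<le> ereal d \<and> v (z0 - w) \<le> v w"
    proof
      fix w assume w: "w \<in> set ws"
      have "poly H w = c * (\<Prod>w'\<leftarrow>ws. w - w')" using cws(2) by (simp add: poly_lin_prod)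
      also have "(\<Prod>w'\<leftarrow>ws. w - w') = 0" using w by (simp add: prod_list_zero_iff)
      finally have "g (\<gamma> + w) = 0" using polyH by simp
      then have A: "v (z0 - w) \<le> ereal d" using assms(12) d unfolding g_def z0_def
        by (metis diff_diff_eq)
      have "v (z0 - w) \<le> v (z0 - (z0 - w))"
        by (rule v_diff_ge) (use A d in \<open>auto simp: z0_def\<close>)
      then show "v (z0 - w) \<le> ereal d \<and> v (z0 - w) \<le> v w" using A by simp
    qed
    define X where "X = v (g a)"
    have Xeq: "X = v (poly H z0)" unfolding X_def z0_def polyH by simp
    have up: "X \<le> ereal (real k - real m + real p^(2*m) * d)" if "m \<le> k" for m
    proof -
      have "X \<le> v (coeff H (p^(2*m))) + ereal (real (p^(2*m)) * d)"
        unfolding Xeq by (rule key_upper[OF cws(2,1) wsprop])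
      then show ?thesis using cex[OF that] by simp
    qed
    have hx: "X > ereal (real k - real n + 1 / (real p ^ 2 - 1))" using assms(13) unfolding X_def g_def .
    obtain x where x: "X = ereal x"
      using up[of 0] hx by (cases X) auto
    have goal1: "d > 1 / (real p ^ (2*n) * (real p ^ 2 - 1))"
      by (rule final_arith1[OF p2, of x k]) (use up[OF assms(10)] hx x in auto)
    have goal2: "x = real k - real n + real p^(2*n) * d" if hx2: "x \<le> real k - real n + 1 + 1 / (real p ^ 2 - 1)"
    proof -
      have d0: "d \<ge> 0"
      proof -
        have "1 / (real p ^ (2*n) * (real p ^ 2 - 1)) \<ge> 0"
        proof -
          have "real p ^ 2 \<ge> 2^2" using p2 by (intro power_mono) auto
          then show ?thesis by simp
        qed
        then show ?thesis using goal1 by linarith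
      qed
      define Lf where "Lf m = real k - real m + real p^(2*m) * d" for m
      define Lmin where "Lmin = Min (Lf ` {0..k})"
      have lo: "ereal Lmin \<le> X"
        unfolding Xeq poly_altdef
      proof (rule v_sum_ge)
        fix j assume "j \<in> {..degree H}"
        show "ereal Lmin \<le> v (coeff H j * z0 ^ j)"
        proof (cases "j = 0")
          case True
          have "coeff H 0 = poly H 0" by (simp add: poly_0_coeff_0)
          also have "\<dots> = 0" using polyH[of 0] assms(11) unfolding g_def by simp
          finally show ?thesis using True by simp
        next
          case False
          then obtain m where m: "m \<le> k" "p^(2*m) \<le> j" "m < k \<longrightarrow> j < p^(2*m+2)"
            using level[OF p1, of j k] by auto
          have cl: "ereal (real k - real m) \<le> v (coeff H j)"
            unfolding H_def using coeff_lower[OF assms(1) vp vg vb _ m(2,1,3)] False by simp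
          have "real (p^(2*m)) \<le> real j" using m(2) by (simp only: of_nat_le_iff)
          then have "real p^(2*m) * d \<le> real j * d" using d0 by (simp add: mult_right_mono)
          moreover have "Lmin \<le> Lf m" unfolding Lmin_def using m(1) by (intro Min_le) auto
          ultimately have "Lmin \<le> real k - real m + real j * d" unfolding Lf_def by linarith
          then have "ereal Lmin \<le> ereal (real k - real m) + ereal (real j * d)" by simp
          also have "\<dots> \<le> v (coeff H j) + ereal (real j * d)" using cl by (rule add_right_mono)
          also have "\<dots> = v (coeff H j * z0 ^ j)"
            by (simp add: v_mult v_pow z0_def d)
          finally show ?thesis .
        qed
      qed
      have "Lmin \<in> Lf ` {0..k}" unfolding Lmin_def by (rule Min_in) auto
      then obtain m where m: "m \<in> {0..k}" "Lmin = Lf m" by blast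
      have "real k - real m + real p^(2*m) * d \<le> x" using lo m x unfolding Lf_def by simp
      moreover have "x \<le> real k - real n + real p^(2*n) * d" using up[OF assms(10)] x by simp
      ultimately show ?thesis using final_arith2[OF p2 _ _ goal1 hx2] by blast
    qed
    show ?thesis
    proof (intro conjI impI)
      show "v (a - \<gamma>) > ereal (1 / (real p ^ (2*n) * (real p ^ 2 - 1)))" using goal1 d by simp
      assume "v (g_poly_fun p k \<beta> \<pi> a) \<le> ereal (real k - real n + 1 + 1 / (real p ^ 2 - 1))"
      then have "x \<le> real k - real n + 1 + 1 / (real p ^ 2 - 1)" using x unfolding X_def g_def by simp
      from goal2[OF this] have xe: "x = real k - real n + real p^(2*n) * d" .
      have "real p ^ (2*n) > 0" using p1 by simp
      then have "d = 1 / real p ^ (2*n) * (x - (real k - real n))" using xe by (simp add: field_simps)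
      then show "v (a - \<gamma>) = ereal (1 / real p ^ (2*n)) * (v (g_poly_fun p k \<beta> \<pi> a) - ereal (real k - real n))"
        using d x unfolding X_def g_def by simp
    qed
  qed
qed


end
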